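(* Let $\Omega\subset\mathbb{R}^2$ be open and bounded with Lipschitz boundary, let $f\in L^2(\Omega)$ be not identically zero, and for $\lambda_1,\lambda_2>0$ let $(u^*,v^* )\in BV(\Omega)\times L^2(\Omega)$ be an optimal pair for $$\min_{u\in BV(\Omega),\,v\in L^2(\Omega)}\Big\{|Du|(\Omega)+\lambda_1\|v\|_{L^1(\Omega)}+\frac{\lambda_2}{2}\|f-u-v\|_{L^2(\Omega)}^2\Big\}.$$ Then: (1) for fixed finite $\lambda_1$, $|Du^*|(\Omega)\to0$ and $v^*\to0$ in $L^1(\Omega)$ as $\lambda_2\to0$; (2) for fixed finite $\lambda_2$, $|Du^*|(\Omega)\to0$ and $v^*\to f-u^*$ in $L^2(\Omega)$ (i.e. $\|f-u^*-v^*\|_{L^2(\Omega)}\to0$) as $\lambda_1\to0$.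
   Context: $|Du|(\Omega)$ denotes the total variation of $u$ and $BV(\Omega)$ the space of functions of bounded variation; $(u^*,v^* )$ depends on $(\lambda_1,\lambda_2)$. *)

theory Defs
  imports "HOL-Analysis.Analysis"
begin

type_synonym R2 = "real ^ 2"

definition partial_field :: "(R2 \<Rightarrow> R2) \<Rightarrow> 2 \<Rightarrow> R2 \<Rightarrow> R2" where
  "partial_field \<phi> i x = frechet_derivative \<phi> (at x) (axis i 1)"

definition divergence :: "(R2 \<Rightarrow> R2) \<Rightarrow> R2 \<Rightarrow> real" where
  "divergence \<phi> x = (\<Sum>i\<in>UNIV. partial_field \<phi> i x $ i)"

definition test_fields :: "R2 set \<Rightarrow> (R2 \<Rightarrow> R2) set" where
  "test_fields \<Omega> = {\<phi>. (\<forall>x. \<phi> differentiable (at x))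
       \<and> (\<forall>i. continuous_on UNIV (partial_field \<phi> i))
       \<and> compact (closure {x. \<phi> x \<noteq> 0}) \<and> closure {x. \<phi> x \<noteq> 0} \<subseteq> \<Omega>
       \<and> (\<forall>x. norm (\<phi> x) \<le> 1)}"

definition total_variation :: "R2 set \<Rightarrow> (R2 \<Rightarrow> real) \<Rightarrow> ereal" where
  "total_variation \<Omega> u =
     (SUP \<phi>\<in>test_fields \<Omega>. ereal (LINT x|lebesgue_on \<Omega>. u x * divergence \<phi> x))"

definition BV :: "R2 set \<Rightarrow> (R2 \<Rightarrow> real) set" where
  "BV \<Omega> = {u. integrable (lebesgue_on \<Omega>) u \<and> total_variation \<Omega> u < \<infinity>}"

definition L2 :: "R2 set \<Rightarrow> (R2 \<Rightarrow> real) set" where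
  "L2 \<Omega> = {u. u \<in> borel_measurable (lebesgue_on \<Omega>)
               \<and> integrable (lebesgue_on \<Omega>) (\<lambda>x. (u x)\<^sup>2)}"

definition lipschitz_boundary :: "R2 set \<Rightarrow> bool" where
  "lipschitz_boundary \<Omega> \<longleftrightarrow>
     (\<forall>p\<in>frontier \<Omega>. \<exists>r>0. \<exists>(R::R2 \<Rightarrow> R2) (g::real \<Rightarrow> real) (L::real). orthogonal_transformation R \<and> L-lipschitz_on UNIV g \<and>
        \<Omega> \<inter> ball p r = {x\<in>ball p r. (R (x - p)) $ 2 < g ((R (x - p)) $ 1)})"

definition energy :: "R2 set \<Rightarrow> (R2 \<Rightarrow> real) \<Rightarrow> real \<Rightarrow> real \<Rightarrow> (R2 \<Rightarrow> real) \<Rightarrow> (R2 \<Rightarrow> real) \<Rightarrow> ereal" where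
  "energy \<Omega> f lam1 lam2 u v =
     total_variation \<Omega> u
     + ereal (lam1 * (LINT x|lebesgue_on \<Omega>. \<bar>v x\<bar>)
              + lam2 / 2 * (LINT x|lebesgue_on \<Omega>. (f x - u x - v x)\<^sup>2))"

definition optimal_pair :: "R2 set \<Rightarrow> (R2 \<Rightarrow> real) \<Rightarrow> real \<Rightarrow> real \<Rightarrow> (R2 \<Rightarrow> real) \<Rightarrow> (R2 \<Rightarrow> real) \<Rightarrow> bool" where
  "optimal_pair \<Omega> f lam1 lam2 u v \<longleftrightarrow> u \<in> BV \<Omega> \<and> v \<in> L2 \<Omega> \<and>
     (\<forall>u'\<in>BV \<Omega>. \<forall>v'\<in>L2 \<Omega>. energy \<Omega> f lam1 lam2 u v \<le> energy \<Omega> f lam1 lam2 u' v')"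

end

theory Submission
  imports Defs
begin

lemma zero_field_test: "(\<lambda>_. 0) \<in> test_fields \<Omega>"
  unfolding test_fields_def partial_field_def by simp

lemma div_zero: "divergence (\<lambda>_. 0) x = 0"
  unfolding divergence_def partial_field_def by simp

lemma tv_nonneg: "0 \<le> total_variation \<Omega> u"
  unfolding total_variation_def
  by (rule SUP_upper2[OF zero_field_test]) (simp add: div_zero)

lemma tv_zero: "total_variation \<Omega> (\<lambda>_. 0) = 0"
proof -
  have "total_variation \<Omega> (\<lambda>_. 0) = (SUP \<phi>\<in>test_fields \<Omega>. ereal 0)"
    unfolding total_variation_def by simp
  also have "\<dots> = 0" using zero_field_test by (subst SUP_const) (auto simp: zero_ereal_def)
  finally show ?thesis .
qed

lemma zero_BV: "(\<lambda>_. 0) \<in> BV \<Omega>"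
  unfolding BV_def by (simp add: tv_zero)

lemma zero_L2: "(\<lambda>_. 0) \<in> L2 \<Omega>"
  unfolding L2_def by simp

lemma split_ineq:
  assumes "T + ereal (a + b) \<le> ereal c" "0 \<le> T" "0 \<le> a" "0 \<le> b"
  shows "T \<le> ereal c \<and> a + b \<le> c"
  using assms by (cases T) auto

lemma bound1:
  assumes "optimal_pair \<Omega> f l1 l2 u v" "l1 \<ge> 0" "l2 \<ge> 0"
  shows "total_variation \<Omega> u \<le> ereal (l2/2 * (LINT x|lebesgue_on \<Omega>. (f x)\<^sup>2))
    \<and> l1 * (LINT x|lebesgue_on \<Omega>. \<bar>v x\<bar>) + l2 / 2 * (LINT x|lebesgue_on \<Omega>. (f x - u x - v x)\<^sup>2)
       \<le> l2/2 * (LINT x|lebesgue_on \<Omega>. (f x)\<^sup>2)"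
proof -
  have "energy \<Omega> f l1 l2 u v \<le> energy \<Omega> f l1 l2 (\<lambda>_. 0) (\<lambda>_. 0)"
    using assms(1) zero_BV zero_L2 unfolding optimal_pair_def by blast
  then have "total_variation \<Omega> u + ereal (l1 * (LINT x|lebesgue_on \<Omega>. \<bar>v x\<bar>)
              + l2 / 2 * (LINT x|lebesgue_on \<Omega>. (f x - u x - v x)\<^sup>2))
        \<le> ereal (l2/2 * (LINT x|lebesgue_on \<Omega>. (f x)\<^sup>2))"
    unfolding energy_def by (simp add: tv_zero)
  then show ?thesis
    by (intro split_ineq) (auto simp: tv_nonneg assms)
qed

lemma bound2:
  assumes "optimal_pair \<Omega> f l1 l2 u v" "l1 \<ge> 0" "l2 \<ge> 0" "f \<in> L2 \<Omega>"
  shows "total_variation \<Omega> u \<le> ereal (l1 * (LINT x|lebesgue_on \<Omega>. \<bar>f x\<bar>))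
    \<and> l1 * (LINT x|lebesgue_on \<Omega>. \<bar>v x\<bar>) + l2 / 2 * (LINT x|lebesgue_on \<Omega>. (f x - u x - v x)\<^sup>2)
       \<le> l1 * (LINT x|lebesgue_on \<Omega>. \<bar>f x\<bar>)"
proof -
  have "energy \<Omega> f l1 l2 u v \<le> energy \<Omega> f l1 l2 (\<lambda>_. 0) f"
    using assms(1,4) zero_BV unfolding optimal_pair_def by blast
  then have "total_variation \<Omega> u + ereal (l1 * (LINT x|lebesgue_on \<Omega>. \<bar>v x\<bar>)
              + l2 / 2 * (LINT x|lebesgue_on \<Omega>. (f x - u x - v x)\<^sup>2))
        \<le> ereal (l1 * (LINT x|lebesgue_on \<Omega>. \<bar>f x\<bar>))"
    unfolding energy_def by (simp add: tv_zero)
  then show ?thesis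
    by (intro split_ineq) (auto simp: tv_nonneg assms)
qed

lemma ereal_lim: "((\<lambda>l::real. ereal (C * l)) \<longlongrightarrow> 0) (at_right 0)"
proof -
  have "((\<lambda>l::real. C * l) \<longlongrightarrow> C * 0) (at_right 0)"
    by (intro tendsto_intros)
  then show ?thesis unfolding zero_ereal_def by (intro tendsto_ereal) simp
qed

theorem corollary5p1:
  fixes \<Omega> :: "R2 set" and f :: "R2 \<Rightarrow> real"
  assumes "open \<Omega>" and "bounded \<Omega>" and "lipschitz_boundary \<Omega>"
    and "f \<in> L2 \<Omega>" and "\<not> (AE x in lebesgue_on \<Omega>. f x = 0)"
  shows "(\<forall>lam1>0. \<forall>U V. (\<forall>lam2>0. optimal_pair \<Omega> f lam1 lam2 (U lam2) (V lam2)) \<longrightarrow>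
            ((\<lambda>lam2. total_variation \<Omega> (U lam2)) \<longlongrightarrow> 0) (at_right 0) \<and>
            ((\<lambda>lam2. LINT x|lebesgue_on \<Omega>. \<bar>V lam2 x\<bar>) \<longlongrightarrow> 0) (at_right 0))
       \<and> (\<forall>lam2>0. \<forall>U V. (\<forall>lam1>0. optimal_pair \<Omega> f lam1 lam2 (U lam1) (V lam1)) \<longrightarrow>
            ((\<lambda>lam1. total_variation \<Omega> (U lam1)) \<longlongrightarrow> 0) (at_right 0) \<and>
            ((\<lambda>lam1. sqrt (LINT x|lebesgue_on \<Omega>. (f x - U lam1 x - V lam1 x)\<^sup>2)) \<longlongrightarrow> 0) (at_right 0))"
proof (intro conjI allI impI)
  define F2 where "F2 = (LINT x|lebesgue_on \<Omega>. (f x)\<^sup>2)"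
  define F1 where "F1 = (LINT x|lebesgue_on \<Omega>. \<bar>f x\<bar>)"
  have F1: "F1 \<ge> 0" unfolding F1_def by simp
  have F2: "F2 \<ge> 0" unfolding F2_def by simp
  {
    fix lam1 :: real and U V
    assume l1: "lam1 > 0" and opt: "\<forall>lam2>0. optimal_pair \<Omega> f lam1 lam2 (U lam2) (V lam2)"
    have ev: "eventually (\<lambda>l. l > (0::real)) (at_right 0)"
      by (simp add: eventually_at_right_less)
    have b: "eventually (\<lambda>l. total_variation \<Omega> (U l) \<le> ereal (F2/2 * l)
        \<and> (LINT x|lebesgue_on \<Omega>. \<bar>V l x\<bar>) \<le> (F2/(2*lam1)) * l) (at_right 0)"
      using ev
    proof (rule eventually_mono)
      fix l :: real assume l: "l > 0"
      from bound1[OF opt[rule_format, OF l]] l l1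
      have *: "total_variation \<Omega> (U l) \<le> ereal (l/2 * F2)"
        "lam1 * (LINT x|lebesgue_on \<Omega>. \<bar>V l x\<bar>) + l / 2 * (LINT x|lebesgue_on \<Omega>. (f x - U l x - V l x)\<^sup>2) \<le> l/2 * F2"
        unfolding F2_def by auto
      have "l / 2 * (LINT x|lebesgue_on \<Omega>. (f x - U l x - V l x)\<^sup>2) \<ge> 0" using l by simp
      then have "lam1 * (LINT x|lebesgue_on \<Omega>. \<bar>V l x\<bar>) \<le> l/2 * F2" using *(2) by linarith
      then have "(LINT x|lebesgue_on \<Omega>. \<bar>V l x\<bar>) \<le> (F2/(2*lam1)) * l"
        using l1 by (simp add: field_simps)
      moreover have "ereal (l/2 * F2) = ereal (F2/2 * l)" by simp
      ultimately show "total_variation \<Omega> (U l) \<le> ereal (F2/2 * l)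
        \<and> (LINT x|lebesgue_on \<Omega>. \<bar>V l x\<bar>) \<le> (F2/(2*lam1)) * l" using *(1) by (simp only:)
    qed
    show "((\<lambda>lam2. total_variation \<Omega> (U lam2)) \<longlongrightarrow> 0) (at_right 0)"
      by (rule tendsto_sandwich[OF _ _ tendsto_const ereal_lim[of "F2/2"]])
         (use b in \<open>auto elim: eventually_mono simp: tv_nonneg\<close>)
    have lim: "((\<lambda>l::real. (F2/(2*lam1)) * l) \<longlongrightarrow> 0) (at_right 0)"
      using tendsto_mult[OF tendsto_const[of "F2/(2*lam1)"] tendsto_ident_at[of 0 "{0<..}"]] by simp
    show "((\<lambda>lam2. LINT x|lebesgue_on \<Omega>. \<bar>V lam2 x\<bar>) \<longlongrightarrow> 0) (at_right 0)"
      by (rule tendsto_sandwich[OF _ _ tendsto_const lim])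
         (use b in \<open>auto elim: eventually_mono\<close>)
  }
  {
    fix lam2 :: real and U V
    assume l2: "lam2 > 0" and opt: "\<forall>lam1>0. optimal_pair \<Omega> f lam1 lam2 (U lam1) (V lam1)"
    have ev: "eventually (\<lambda>l. l > (0::real)) (at_right 0)"
      by (simp add: eventually_at_right_less)
    have b: "eventually (\<lambda>l. total_variation \<Omega> (U l) \<le> ereal (F1 * l)
        \<and> sqrt (LINT x|lebesgue_on \<Omega>. (f x - U l x - V l x)\<^sup>2) \<le> sqrt ((2*F1/lam2) * l)) (at_right 0)"
      using ev
    proof (rule eventually_mono)
      fix l :: real assume l: "l > 0"
      from bound2[OF opt[rule_format, OF l]] l l2 assms(4)
      have *: "total_variation \<Omega> (U l) \<le> ereal (l * F1)"
        "l * (LINT x|lebesgue_on \<Omega>. \<bar>V l x\<bar>) + lam2 / 2 * (LINT x|lebesgue_on \<Omega>. (f x - U l x - V l x)\<^sup>2) \<le> l * F1"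
        unfolding F1_def by auto
      have "l * (LINT x|lebesgue_on \<Omega>. \<bar>V l x\<bar>) \<ge> 0" using l by simp
      then have "lam2 / 2 * (LINT x|lebesgue_on \<Omega>. (f x - U l x - V l x)\<^sup>2) \<le> l * F1" using *(2) by linarith
      then have "(LINT x|lebesgue_on \<Omega>. (f x - U l x - V l x)\<^sup>2) \<le> (2*F1/lam2) * l"
        using l2 by (simp add: field_simps)
      then have "sqrt (LINT x|lebesgue_on \<Omega>. (f x - U l x - V l x)\<^sup>2) \<le> sqrt ((2*F1/lam2) * l)"
        by simp
      moreover have "ereal (l * F1) = ereal (F1 * l)" by (simp add: mult.commute)
      ultimately show "total_variation \<Omega> (U l) \<le> ereal (F1 * l)
        \<and> sqrt (LINT x|lebesgue_on \<Omega>. (f x - U l x - V l x)\<^sup>2) \<le> sqrt ((2*F1/lam2) * l)" using *(1) by (simp only:)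
    qed
    show "((\<lambda>lam1. total_variation \<Omega> (U lam1)) \<longlongrightarrow> 0) (at_right 0)"
      by (rule tendsto_sandwich[OF _ _ tendsto_const ereal_lim[of "F1"]])
         (use b in \<open>auto elim: eventually_mono simp: tv_nonneg\<close>)
    have lim0: "((\<lambda>l::real. (2*F1/lam2) * l) \<longlongrightarrow> 0) (at_right 0)"
      using tendsto_mult[OF tendsto_const[of "2*F1/lam2"] tendsto_ident_at[of 0 "{0<..}"]] by simp
    have lim: "((\<lambda>l::real. sqrt ((2*F1/lam2) * l)) \<longlongrightarrow> 0) (at_right 0)"
      using tendsto_real_sqrt[OF lim0] by simp
    show "((\<lambda>lam1. sqrt (LINT x|lebesgue_on \<Omega>. (f x - U lam1 x - V lam1 x)\<^sup>2)) \<longlongrightarrow> 0) (at_right 0)"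
      by (rule tendsto_sandwich[OF _ _ tendsto_const lim])
         (use b in \<open>auto elim: eventually_mono\<close>)
  }
qed

end
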